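(* There is a finitely generated infinite group $G$ and a Cayley graph $\mathrm{Cay}(G;S)$ of $G$ (with $S$ a finite generating set) which does not have any regular spanning tree.
   Context: $\mathrm{Cay}(G;S)$ has vertex set $G$, with $g$ adjacent to $gs$ for $s\in S\cup S^{-1}$. A regular spanning tree is a subgraph that is a tree containing every vertex, in which all vertices have the same degree. *)

theory Defs
  imports "HOL-Algebra.Algebra"
begin

definition cayley_edges :: "('a, 'b) monoid_scheme \<Rightarrow> 'a set \<Rightarrow> 'a set set" where
  "cayley_edges G S = {{g, h} | g h. g \<in> carrier G \<and> h \<in> carrier G \<and> g \<noteq> h \<and>
      (\<exists>s\<in>S. h = g \<otimes>\<^bsub>G\<^esub> s \<or> h = g \<otimes>\<^bsub>G\<^esub> inv\<^bsub>G\<^esub> s)}"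

definition graph_connected :: "'a set \<Rightarrow> 'a set set \<Rightarrow> bool" where
  "graph_connected V E \<longleftrightarrow>
     (\<forall>u\<in>V. \<forall>v\<in>V. (\<lambda>x y. {x, y} \<in> E \<and> x \<in> V \<and> y \<in> V)\<^sup>*\<^sup>* u v)"

definition graph_acyclic :: "'a set \<Rightarrow> 'a set set \<Rightarrow> bool" where
  "graph_acyclic V E \<longleftrightarrow>
     \<not> (\<exists>xs. length xs \<ge> 3 \<and> distinct xs \<and> set xs \<subseteq> V \<and>
          (\<forall>i < length xs - 1. {xs ! i, xs ! Suc i} \<in> E) \<and> {last xs, hd xs} \<in> E)"

definition graph_degree :: "'a set set \<Rightarrow> 'a \<Rightarrow> nat" where
  "graph_degree E v = card {w. w \<noteq> v \<and> {v, w} \<in> E}"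

definition has_regular_spanning_tree :: "'a set \<Rightarrow> 'a set set \<Rightarrow> bool" where
  "has_regular_spanning_tree V E \<longleftrightarrow>
     (\<exists>T. T \<subseteq> E \<and> graph_connected V T \<and> graph_acyclic V T \<and>
          (\<exists>d. \<forall>v\<in>V. graph_degree T v = d))"

end

theory Submission
  imports Defs "HOL-Library.Countable"
begin

fun red :: "nat list \<Rightarrow> bool" where
  "red [] = True"
| "red [x] = (x < 3)"
| "red (x # y # w) = (x < 3 \<and> (x = 2 \<longleftrightarrow> y \<noteq> 2) \<and> red (y # w))"

fun lmul :: "nat \<Rightarrow> nat list \<Rightarrow> nat list" where
  "lmul x [] = [x]"
| "lmul x (y # w) = (if x = 2 then (if y = 2 then w else x # y # w)
     else if y = 2 then x # y # w else if x = y then (1 - x) # w else w)"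

lemma red_tl: "red (x # w) \<Longrightarrow> red w"
  by (cases w) auto

lemma red_hd: "red (x # w) \<Longrightarrow> x < 3"
  by (cases w) auto

lemma red_lmul: "red w \<Longrightarrow> x < 3 \<Longrightarrow> red (lmul x w)"
  by (cases w rule: red.cases) auto

lemma L2: "red w \<Longrightarrow> lmul 2 (lmul 2 w) = w"
  by (cases w rule: red.cases) auto

lemma L3: "red w \<Longrightarrow> lmul 0 (lmul 1 w) = w \<and> lmul 1 (lmul 0 w) = w"
  by (cases w rule: red.cases) auto

lemma L4: "red w \<Longrightarrow> lmul 0 (lmul 0 w) = lmul 1 w \<and> lmul 1 (lmul 1 w) = lmul 0 w"
  by (cases w rule: red.cases) auto

lemma red_foldr: "red u \<Longrightarrow> red v \<Longrightarrow> red (foldr lmul u v)"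
  by (induction u) (auto intro: red_lmul dest: red_tl red_hd)

lemma lmul_cons: "red (x # w) \<Longrightarrow> lmul x w = x # w"
  by (cases w) auto

lemma foldr_nil: "red w \<Longrightarrow> foldr lmul w [] = w"
proof (induction w)
  case (Cons x w)
  then have "red w" using red_tl by blast
  then show ?case using Cons lmul_cons by simp
qed simp

lemma K: "red u \<Longrightarrow> x < 3 \<Longrightarrow> red v \<Longrightarrow> foldr lmul (lmul x u) v = lmul x (foldr lmul u v)"
proof (cases u)
  case (Cons y w)
  assume r: "red u" "x < 3" "red v"
  then have y: "y < 3" and rw: "red w" using Cons red_hd red_tl by blast+
  have rf: "red (foldr lmul w v)" using red_foldr rw r(3) by blast
  have "x = 0 \<or> x = 1 \<or> x = 2" "y = 0 \<or> y = 1 \<or> y = 2" using r(2) y by arith+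
  then show ?thesis using Cons L2[OF rf] L3[OF rf] L4[OF rf] by (elim disjE) simp_all
qed simp

lemma A: "red w \<Longrightarrow> red u \<Longrightarrow> red v \<Longrightarrow>
   foldr lmul (foldr lmul w u) v = foldr lmul w (foldr lmul u v)"
proof (induction w)
  case (Cons x w)
  have "red w" "x < 3" using red_tl[OF Cons.prems(1)] red_hd[OF Cons.prems(1)] by auto
  have "red (foldr lmul w u)" using red_foldr \<open>red w\<close> Cons.prems by blast
  then have "foldr lmul (foldr lmul (x # w) u) v = lmul x (foldr lmul (foldr lmul w u) v)"
    using K \<open>x < 3\<close> Cons.prems by simp
  also have "\<dots> = foldr lmul (x # w) (foldr lmul u v)"
    using Cons.IH \<open>red w\<close> Cons.prems by simp
  finally show ?case .
qed simp

definition linv :: "nat \<Rightarrow> nat" where "linv x = (if x = 2 then 2 else 1 - x)"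

lemma linv_red: "x < 3 \<Longrightarrow> linv x < 3" by (auto simp: linv_def)

lemma lmul_linv: "red v \<Longrightarrow> x < 3 \<Longrightarrow> lmul x (lmul (linv x) v) = v"
proof -
  assume a: "red v" "x < 3"
  then have "x = 0 \<or> x = 1 \<or> x = 2" by auto
  then show ?thesis using L2[OF a(1)] L3[OF a(1)] by (auto simp: linv_def)
qed

lemma inv_ex: "red w \<Longrightarrow> \<exists>iw. red iw \<and> (\<forall>v. red v \<longrightarrow> foldr lmul w (foldr lmul iw v) = v)"
proof (induction w)
  case Nil
  show ?case by (intro exI[of _ "[]"]) simp
next
  case (Cons x w)
  have rw: "red w" and x: "x < 3" using red_tl[OF Cons.prems] red_hd[OF Cons.prems] by auto
  obtain iw where iw: "red iw" "\<And>v. red v \<Longrightarrow> foldr lmul w (foldr lmul iw v) = v"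
    using Cons.IH rw by blast
  have rl: "red [linv x]" using linv_red x by simp
  define jw where "jw = foldr lmul iw [linv x]"
  have "red jw" unfolding jw_def using red_foldr iw rl by auto
  moreover have "foldr lmul (x # w) (foldr lmul jw v) = v" if "red v" for v
  proof -
    have "foldr lmul jw v = foldr lmul iw (lmul (linv x) v)"
      unfolding jw_def using A[OF iw(1) rl that] by simp
    moreover have "red (lmul (linv x) v)" using red_lmul linv_red x that by auto
    ultimately show ?thesis using iw(2) lmul_linv that x by simp
  qed
  ultimately show ?case by blast
qed

lemma reach_closed:
  assumes "(\<lambda>x y. {x,y} \<in> T \<and> x \<in> V \<and> y \<in> V)\<^sup>*\<^sup>* a b" "a \<in> C"
    "\<And>y z. y \<in> C \<Longrightarrow> {y,z} \<in> T \<Longrightarrow> z \<in> C"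
  shows "b \<in> C"
  using assms(1,2) by (induction rule: rtranclp_induct) (auto intro: assms(3))

lemma no_rst:
  assumes tV: "ta \<in> V" "tb \<in> V" "tc \<in> V" and uV: "ua \<in> V" "ub \<in> V" "uc \<in> V"
    and dist: "ta \<noteq> tb" "ta \<noteq> tc" "tb \<noteq> tc"
    and nba: "\<And>w. {ta,w} \<in> E \<Longrightarrow> w \<noteq> ta \<Longrightarrow> w \<in> {tb,tc,ua}"
    and nbb: "\<And>w. {tb,w} \<in> E \<Longrightarrow> w \<noteq> tb \<Longrightarrow> w \<in> {ta,tc,ub}"
    and nbc: "\<And>w. {tc,w} \<in> E \<Longrightarrow> w \<noteq> tc \<Longrightarrow> w \<in> {ta,tb,uc}"
    and Aa: "ta \<in> Aa" "tb \<in> Aa" "tc \<in> Aa" "ua \<notin> Aa"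
    and Ab: "ta \<in> Ab" "tb \<in> Ab" "tc \<in> Ab" "ub \<notin> Ab"
    and Ac: "ta \<in> Ac" "tb \<in> Ac" "tc \<in> Ac" "uc \<notin> Ac"
    and cra: "\<And>p q. {p,q} \<in> E \<Longrightarrow> p \<in> Aa \<Longrightarrow> q \<notin> Aa \<Longrightarrow> {p,q} = {ta,ua}"
    and crb: "\<And>p q. {p,q} \<in> E \<Longrightarrow> p \<in> Ab \<Longrightarrow> q \<notin> Ab \<Longrightarrow> {p,q} = {tb,ub}"
    and crc: "\<And>p q. {p,q} \<in> E \<Longrightarrow> p \<in> Ac \<Longrightarrow> q \<notin> Ac \<Longrightarrow> {p,q} = {tc,uc}"
  shows "\<not> has_regular_spanning_tree V E"
proof
  assume "has_regular_spanning_tree V E"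
  then obtain T d where TE: "T \<subseteq> E" and conn: "graph_connected V T" and acyc: "graph_acyclic V T"
    and deg: "\<And>v. v \<in> V \<Longrightarrow> graph_degree T v = d"
    unfolding has_regular_spanning_tree_def by blast
  let ?R = "\<lambda>x y. {x,y} \<in> T \<and> x \<in> V \<and> y \<in> V"
  have br: "{t,u} \<in> T" if "t \<in> V" "u \<in> V" "t \<in> A" "u \<notin> A"
    "\<And>p q. {p,q} \<in> E \<Longrightarrow> p \<in> A \<Longrightarrow> q \<notin> A \<Longrightarrow> {p,q} = {t,u}" for t u A
  proof (rule ccontr)
    assume nt: "{t,u} \<notin> T"
    have "?R\<^sup>*\<^sup>* t u" using conn that unfolding graph_connected_def by blast
    then have "u \<in> A"
    proof (rule reach_closed)
      show "t \<in> A" by fact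
      fix y z assume "y \<in> A" "{y,z} \<in> T"
      then show "z \<in> A" using that(5)[of y z] TE nt by (metis subsetD)
    qed
    then show False using that by blast
  qed
  have ba: "{ta,ua} \<in> T" using br[OF tV(1) uV(1) Aa(1) Aa(4) cra] .
  have bb: "{tb,ub} \<in> T" using br[OF tV(2) uV(2) Ab(2) Ab(4) crb] .
  have bc: "{tc,uc} \<in> T" using br[OF tV(3) uV(3) Ac(3) Ac(4) crc] .
  have tri: "{t,p} \<in> T \<or> {t,q} \<in> T" if "t \<in> V" "p \<in> V" "t \<in> A" "p \<in> A" "p \<noteq> t" "u \<notin> A"
    "\<And>w. {t,w} \<in> E \<Longrightarrow> w \<noteq> t \<Longrightarrow> w \<in> {p,q,u}"
    "\<And>p q. {p,q} \<in> E \<Longrightarrow> p \<in> A \<Longrightarrow> q \<notin> A \<Longrightarrow> {p,q} = {t,u}" for t p q u A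
  proof (rule ccontr)
    assume nt: "\<not> ({t,p} \<in> T \<or> {t,q} \<in> T)"
    have "?R\<^sup>*\<^sup>* t p" using conn that unfolding graph_connected_def by blast
    then have "p \<in> - A \<union> {t}"
    proof (rule reach_closed)
      show "t \<in> - A \<union> {t}" by simp
      fix y z assume y: "y \<in> - A \<union> {t}" and yz: "{y,z} \<in> T"
      show "z \<in> - A \<union> {t}"
      proof (cases "y = t")
        case True
        then show ?thesis using that(7)[of z] yz TE nt that(6) by auto
      next
        case False
        then have "y \<notin> A" using y by simp
        show ?thesis
        proof (rule ccontr)
          assume "z \<notin> - A \<union> {t}"
          then have "z \<in> A" "z \<noteq> t" by auto
          moreover have "{z,y} \<in> E" using yz TE by (auto simp: insert_commute)
          ultimately have "{z,y} = {t,u}" using that(8) \<open>y \<notin> A\<close> by blast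
          then show False using \<open>z \<in> A\<close> \<open>z \<noteq> t\<close> that(6) by (auto simp: doubleton_eq_iff)
        qed
      qed
    qed
    then show False using that by auto
  qed
  have ca: "{ta,tb} \<in> T \<or> {ta,tc} \<in> T"
    using tri[of ta tb Aa ua tc] tV Aa dist nba cra by auto
  have cb: "{tb,ta} \<in> T \<or> {tb,tc} \<in> T"
    using tri[of tb ta Ab ub tc] tV Ab dist nbb crb by auto
  have cc: "{tc,ta} \<in> T \<or> {tc,tb} \<in> T"
    using tri[of tc ta Ac uc tb] tV Ac dist nbc crc by auto
  have notall: "\<not> ({ta,tb} \<in> T \<and> {tb,tc} \<in> T \<and> {tc,ta} \<in> T)"
  proof
    assume h: "{ta,tb} \<in> T \<and> {tb,tc} \<in> T \<and> {tc,ta} \<in> T"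
    have "\<forall>i < length [ta,tb,tc] - 1. {[ta,tb,tc] ! i, [ta,tb,tc] ! Suc i} \<in> T"
      using h by (auto simp: less_Suc_eq)
    moreover have "{last [ta,tb,tc], hd [ta,tb,tc]} \<in> T" using h by simp
    moreover have "length [ta,tb,tc] \<ge> 3" "distinct [ta,tb,tc]" "set [ta,tb,tc] \<subseteq> V"
      using tV dist by auto
    ultimately show False using acyc unfolding graph_acyclic_def by blast
  qed
  have key: False if "{a,b} \<notin> T" "{a,c} \<in> T" "{b,c} \<in> T" "{a,ua} \<in> T" "{c,uc} \<in> T"
    "a \<in> V" "c \<in> V" "a \<noteq> b" "a \<noteq> c" "b \<noteq> c" "ua \<notin> {a,b,c}" "uc \<notin> {a,b,c}"
    "\<And>w. {a,w} \<in> E \<Longrightarrow> w \<noteq> a \<Longrightarrow> w \<in> {b,c,ua}"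
    "\<And>w. {c,w} \<in> E \<Longrightarrow> w \<noteq> c \<Longrightarrow> w \<in> {a,b,uc}" for a b c ua uc
  proof -
    have "{w. w \<noteq> a \<and> {a,w} \<in> T} = {c,ua}"
    proof (intro equalityI subsetI)
      fix w assume "w \<in> {w. w \<noteq> a \<and> {a,w} \<in> T}"
      then have w: "w \<noteq> a" "{a,w} \<in> T" by auto
      then have "w \<in> {b,c,ua}" using that(13) TE by blast
      moreover have "w \<noteq> b" using w that(1) by blast
      ultimately show "w \<in> {c,ua}" by blast
    next
      fix w assume "w \<in> {c,ua}" then show "w \<in> {w. w \<noteq> a \<and> {a,w} \<in> T}"
        using that by auto
    qed
    then have "graph_degree T a = 2" using that unfolding graph_degree_def by auto
    moreover have "{w. w \<noteq> c \<and> {c,w} \<in> T} = {a,b,uc}"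
    proof (intro equalityI subsetI)
      fix w assume "w \<in> {w. w \<noteq> c \<and> {c,w} \<in> T}"
      then have w: "w \<noteq> c" "{c,w} \<in> T" by auto
      then show "w \<in> {a,b,uc}" using that(14) TE by blast
    next
      have "{c,a} \<in> T" "{c,b} \<in> T" using that(2,3) by (simp_all add: insert_commute)
      fix w assume "w \<in> {a,b,uc}" then show "w \<in> {w. w \<noteq> c \<and> {c,w} \<in> T}"
        using that \<open>{c,a} \<in> T\<close> \<open>{c,b} \<in> T\<close> by auto
    qed
    then have "graph_degree T c = 3" using that unfolding graph_degree_def by auto
    ultimately show False using deg that by force
  qed
  show False
  proof (cases "{ta,tb} \<in> T")
    case False
    show False
      apply (rule key[of ta tb tc ua uc])
      using False ca cb ba bc tV dist Aa Ac nba nbc by (auto simp: insert_commute)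
  next
    case True
    show False
    proof (cases "{tb,tc} \<in> T")
      case False
      show False
        apply (rule key[of tb tc ta ub ua])
        using False cb cc True ba bb tV dist Aa Ab nba nbb by (auto simp: insert_commute)
    next
      case True2: True
      then have "{tc,ta} \<notin> T" using notall True by blast
      show False
        apply (rule key[of tc ta tb uc ub])
        using \<open>{tc,ta} \<notin> T\<close> ca cc True True2 bb bc tV dist Ab Ac nbb nbc by (auto simp: insert_commute)
    qed
  qed
qed

lemma lmul_linv2: "red g \<Longrightarrow> x < 3 \<Longrightarrow> lmul (linv x) (lmul x g) = g"
proof -
  assume a: "red g" "x < 3"
  then have "x = 0 \<or> x = 1 \<or> x = 2" by arith
  then show ?thesis using L2[OF a(1)] L3[OF a(1)] by (auto simp: linv_def)
qed

definition sfx :: "nat list \<Rightarrow> nat list \<Rightarrow> bool" where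
  "sfx u w \<longleftrightarrow> (\<exists>z. w = z @ u)"

lemma sfx_Nil: "sfx (y # t) [] = False"
  by (simp add: sfx_def)

lemma sfx_Cons: "sfx u (y # w) \<longleftrightarrow> u = y # w \<or> sfx u w"
  unfolding sfx_def by (auto simp: Cons_eq_append_conv)

lemma sfx_cross:
  assumes "red g" "x < 3" "sfx (2 # t) g \<noteq> sfx (2 # t) (lmul x g)"
  shows "(g = t \<and> lmul x g = 2 # t) \<or> (g = 2 # t \<and> lmul x g = t)"
  using assms by (cases g) (auto simp: sfx_Cons sfx_Nil split: if_splits)

definition Gm :: "nat monoid" where
  "Gm = \<lparr>carrier = to_nat ` {w :: nat list. red w},
         monoid.mult = (\<lambda>p q. to_nat (foldr lmul (from_nat q :: nat list) (from_nat p))),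
         one = to_nat ([] :: nat list)\<rparr>"

lemma carrier_Gm: "carrier Gm = to_nat ` {w :: nat list. red w}"
  by (simp add: Gm_def)

lemma mult_Gm: "to_nat (v :: nat list) \<otimes>\<^bsub>Gm\<^esub> to_nat (w :: nat list) = to_nat (foldr lmul w v)"
  by (simp add: Gm_def)

lemma one_Gm: "\<one>\<^bsub>Gm\<^esub> = to_nat ([] :: nat list)"
  by (simp add: Gm_def)

lemma in_Gm: "red w \<Longrightarrow> to_nat (w :: nat list) \<in> carrier Gm"
  by (simp add: carrier_Gm)

lemma group_Gm: "group Gm"
proof (rule groupI)
  fix x y assume "x \<in> carrier Gm" "y \<in> carrier Gm"
  then obtain v w :: "nat list" where "red v" "red w" "x = to_nat v" "y = to_nat w"
    by (auto simp: carrier_Gm)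
  then show "x \<otimes>\<^bsub>Gm\<^esub> y \<in> carrier Gm" using red_foldr by (simp add: mult_Gm in_Gm)
next
  show "\<one>\<^bsub>Gm\<^esub> \<in> carrier Gm" by (simp add: one_Gm in_Gm)
next
  fix x y z assume "x \<in> carrier Gm" "y \<in> carrier Gm" "z \<in> carrier Gm"
  then obtain u v w :: "nat list" where "red u" "red v" "red w" "x = to_nat u" "y = to_nat v" "z = to_nat w"
    by (auto simp: carrier_Gm)
  then show "x \<otimes>\<^bsub>Gm\<^esub> y \<otimes>\<^bsub>Gm\<^esub> z = x \<otimes>\<^bsub>Gm\<^esub> (y \<otimes>\<^bsub>Gm\<^esub> z)"
    using A[of w v u] by (simp add: mult_Gm)
next
  fix x assume "x \<in> carrier Gm"
  then obtain w :: "nat list" where "red w" "x = to_nat w" by (auto simp: carrier_Gm)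
  then show "\<one>\<^bsub>Gm\<^esub> \<otimes>\<^bsub>Gm\<^esub> x = x" using foldr_nil by (simp add: mult_Gm one_Gm)
next
  fix x assume "x \<in> carrier Gm"
  then obtain w :: "nat list" where w: "red w" "x = to_nat w" by (auto simp: carrier_Gm)
  obtain iw where iw: "red iw" "\<And>v. red v \<Longrightarrow> foldr lmul w (foldr lmul iw v) = v"
    using inv_ex[OF w(1)] by blast
  have "foldr lmul w iw = []" using iw(2)[of "[]"] foldr_nil[OF iw(1)] by simp
  then have "to_nat iw \<otimes>\<^bsub>Gm\<^esub> x = \<one>\<^bsub>Gm\<^esub>" using w by (simp add: mult_Gm one_Gm)
  then show "\<exists>y\<in>carrier Gm. y \<otimes>\<^bsub>Gm\<^esub> x = \<one>\<^bsub>Gm\<^esub>" using in_Gm[OF iw(1)] by blast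
qed

definition SS :: "nat set" where "SS = {to_nat [0::nat], to_nat [2::nat]}"

lemma inv_a: "inv\<^bsub>Gm\<^esub> (to_nat [0::nat]) = to_nat [1::nat]"
  by (rule group.inv_equality[OF group_Gm]) (simp_all add: mult_Gm one_Gm in_Gm)

lemma inv_b: "inv\<^bsub>Gm\<^esub> (to_nat [2::nat]) = to_nat [2::nat]"
  by (rule group.inv_equality[OF group_Gm]) (simp_all add: mult_Gm one_Gm in_Gm)

lemma edge_char:
  assumes "e \<in> cayley_edges Gm SS"
  shows "\<exists>g x. red g \<and> x < 3 \<and> e = {to_nat g, to_nat (lmul x g)}"
proof -
  obtain p q s where e: "e = {p, q}" "p \<in> carrier Gm" "s \<in> SS"
    "q = p \<otimes>\<^bsub>Gm\<^esub> s \<or> q = p \<otimes>\<^bsub>Gm\<^esub> inv\<^bsub>Gm\<^esub> s"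
    using assms unfolding cayley_edges_def by blast
  obtain g :: "nat list" where g: "red g" "p = to_nat g" using e(2) by (auto simp: carrier_Gm)
  have "q = to_nat (lmul 0 g) \<or> q = to_nat (lmul 1 g) \<or> q = to_nat (lmul 2 g)"
    using e(3,4) g unfolding SS_def by (auto simp: inv_a inv_b mult_Gm)
  then have "\<exists>x<3. q = to_nat (lmul x g)"
    by (elim disjE) (rule exI[of _ 0], simp, rule exI[of _ 1], simp, rule exI[of _ 2], simp)
  then show ?thesis using e(1) g by blast
qed

lemma linv3: "x < 3 \<Longrightarrow> linv x < 3" by (auto simp: linv_def)

lemma nbr:
  assumes "{to_nat t, w} \<in> cayley_edges Gm SS" "red t"
  shows "\<exists>y<3. w = to_nat (lmul y t)"
proof -
  obtain g x where gx: "red g" "x < 3" "{to_nat t, w} = {to_nat g, to_nat (lmul x g)}"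
    using edge_char[OF assms(1)] by blast
  show ?thesis
  proof (cases "t = g")
    case True
    then show ?thesis using gx by (auto simp: doubleton_eq_iff)
  next
    case False
    then have "t = lmul x g" "w = to_nat g" using gx(3) by (auto simp: doubleton_eq_iff)
    then have "w = to_nat (lmul (linv x) t)" using lmul_linv2 gx by simp
    then show ?thesis using linv3 gx(2) by blast
  qed
qed

lemma nbr_list:
  assumes "{to_nat t, w} \<in> cayley_edges Gm SS" "red t"
  shows "w \<in> {to_nat (lmul 0 t), to_nat (lmul 1 t), to_nat (lmul 2 t)}"
proof -
  obtain y where "y < 3" "w = to_nat (lmul y t)" using nbr[OF assms] by blast
  moreover have "y = 0 \<or> y = 1 \<or> y = 2" using \<open>y < 3\<close> by arith
  ultimately show ?thesis by auto
qed

lemma cross: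
  assumes "{p, q} \<in> cayley_edges Gm SS" "p \<in> {r. \<not> sfx (2 # t) (from_nat r)}"
    "q \<notin> {r. \<not> sfx (2 # t) (from_nat r)}"
  shows "{p, q} = {to_nat t, to_nat (2 # t)}"
proof -
  obtain g x where gx: "red g" "x < 3" "{p, q} = {to_nat g, to_nat (lmul x g)}"
    using edge_char[OF assms(1)] by blast
  from gx(3) have pq: "(p = to_nat g \<and> q = to_nat (lmul x g)) \<or> (p = to_nat (lmul x g) \<and> q = to_nat g)"
    by (simp only: doubleton_eq_iff)
  then have "sfx (2 # t) g \<noteq> sfx (2 # t) (lmul x g)"
    using assms(2,3) by (elim disjE) simp_all
  from sfx_cross[OF gx(1,2) this]
  have "(g = t \<and> lmul x g = 2 # t) \<or> (g = 2 # t \<and> lmul x g = t)" .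
  then show ?thesis using gx(3) by (elim disjE) (simp, auto simp: doubleton_eq_iff)
qed

fun alt :: "nat \<Rightarrow> nat list" where
  "alt 0 = []"
| "alt (Suc n) = 0 # 2 # alt n"

lemma red_alt: "red (alt n) \<and> red (2 # alt n)"
  by (induction n) auto

lemma len_alt: "length (alt n) = 2 * n"
  by (induction n) auto

lemma infinite_Gm: "infinite (carrier Gm)"
proof
  assume f: "finite (carrier Gm)"
  have "inj alt" by (rule injI) (metis len_alt mult_left_cancel zero_neq_numeral)
  then have "infinite (range alt)" by (rule range_inj_infinite)
  moreover have "range alt \<subseteq> {w. red w}" using red_alt by auto
  ultimately have "infinite {w :: nat list. red w}" using finite_subset by blast
  moreover have "finite {w :: nat list. red w}"
    using f unfolding carrier_Gm by (rule finite_imageD) simp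
  ultimately show False by blast
qed

lemma gen_Gm: "generate Gm SS = carrier Gm"
proof
  have SSc: "SS \<subseteq> carrier Gm" unfolding SS_def by (auto intro: in_Gm)
  show "generate Gm SS \<subseteq> carrier Gm" using group.generate_incl[OF group_Gm SSc] .
  have letter: "to_nat [x] \<in> generate Gm SS" if "x < 3" for x :: nat
  proof -
    have "x = 0 \<or> x = 1 \<or> x = 2" using that by arith
    moreover have "to_nat [0::nat] \<in> generate Gm SS" "to_nat [2::nat] \<in> generate Gm SS"
      by (auto simp: SS_def intro: generate.incl)
    moreover have "to_nat [1::nat] = to_nat [0::nat] \<otimes>\<^bsub>Gm\<^esub> to_nat [0::nat]"
      by (simp add: mult_Gm)
    ultimately show ?thesis by (auto intro: generate.eng)
  qed
  have "to_nat w \<in> generate Gm SS" if "red w" for w :: "nat list"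
    using that
  proof (induction w)
    case Nil
    show ?case using generate.one[of Gm SS] by (simp add: one_Gm)
  next
    case (Cons x w)
    have rw: "red w" and x: "x < 3" using red_tl[OF Cons.prems] red_hd[OF Cons.prems] by auto
    have "to_nat (x # w) = to_nat w \<otimes>\<^bsub>Gm\<^esub> to_nat [x]"
      using lmul_cons[OF Cons.prems] by (simp add: mult_Gm)
    then show ?case using generate.eng Cons.IH[OF rw] letter[OF x] by metis
  qed
  then show "carrier Gm \<subseteq> generate Gm SS" by (auto simp: carrier_Gm)
qed

theorem proposition5p9:
  shows "\<exists>(G :: nat monoid) S. group G \<and> infinite (carrier G) \<and>
           finite S \<and> S \<subseteq> carrier G \<and> generate G S = carrier G \<and>
           \<not> has_regular_spanning_tree (carrier G) (cayley_edges G S)"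
proof (intro exI conjI)
  show "group Gm" by (rule group_Gm)
  show "infinite (carrier Gm)" by (rule infinite_Gm)
  show "finite SS" by (simp add: SS_def)
  show "SS \<subseteq> carrier Gm" unfolding SS_def by (auto intro: in_Gm)
  show "generate Gm SS = carrier Gm" by (rule gen_Gm)
  show "\<not> has_regular_spanning_tree (carrier Gm) (cayley_edges Gm SS)"
  proof (rule no_rst[where ta = "to_nat ([]::nat list)" and tb = "to_nat [0::nat]" and tc = "to_nat [1::nat]"
        and ua = "to_nat [2::nat]" and ub = "to_nat [2::nat, 0]" and uc = "to_nat [2::nat, 1]"
        and Aa = "{r. \<not> sfx [2] (from_nat r)}" and Ab = "{r. \<not> sfx [2,0] (from_nat r)}"
        and Ac = "{r. \<not> sfx [2,1] (from_nat r)}"])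
    show "\<And>w. {to_nat ([]::nat list), w} \<in> cayley_edges Gm SS \<Longrightarrow> w \<noteq> to_nat ([]::nat list) \<Longrightarrow>
        w \<in> {to_nat [0::nat], to_nat [1::nat], to_nat [2::nat]}"
      using nbr_list[of "[]"] by auto
    show "\<And>w. {to_nat [0::nat], w} \<in> cayley_edges Gm SS \<Longrightarrow> w \<noteq> to_nat [0::nat] \<Longrightarrow>
        w \<in> {to_nat ([]::nat list), to_nat [1::nat], to_nat [2::nat, 0]}"
      using nbr_list[of "[0]"] by auto
    show "\<And>w. {to_nat [1::nat], w} \<in> cayley_edges Gm SS \<Longrightarrow> w \<noteq> to_nat [1::nat] \<Longrightarrow>
        w \<in> {to_nat ([]::nat list), to_nat [0::nat], to_nat [2::nat, 1]}"
      using nbr_list[of "[1]"] by auto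
    show "\<And>p q. {p, q} \<in> cayley_edges Gm SS \<Longrightarrow> p \<in> {r. \<not> sfx [2] (from_nat r)} \<Longrightarrow>
        q \<notin> {r. \<not> sfx [2] (from_nat r)} \<Longrightarrow> {p, q} = {to_nat ([]::nat list), to_nat [2::nat]}"
      using cross[of _ _ "[]"] by simp
    show "\<And>p q. {p, q} \<in> cayley_edges Gm SS \<Longrightarrow> p \<in> {r. \<not> sfx [2,0] (from_nat r)} \<Longrightarrow>
        q \<notin> {r. \<not> sfx [2,0] (from_nat r)} \<Longrightarrow> {p, q} = {to_nat [0::nat], to_nat [2::nat, 0]}"
      using cross[of _ _ "[0]"] by simp
    show "\<And>p q. {p, q} \<in> cayley_edges Gm SS \<Longrightarrow> p \<in> {r. \<not> sfx [2,1] (from_nat r)} \<Longrightarrow>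
        q \<notin> {r. \<not> sfx [2,1] (from_nat r)} \<Longrightarrow> {p, q} = {to_nat [1::nat], to_nat [2::nat, 1]}"
      using cross[of _ _ "[1]"] by simp
  qed (simp_all add: in_Gm sfx_Cons sfx_Nil)
qed

end
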